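(* Let $\omega_0>0$ and $\gamma>0$, and consider the control system on $SU(2)\times SU(2)$ $$\dot X_1(t)=-i\big(\omega_0 S_z+u_x(t)S_x+u_y(t)S_y+u_z(t)S_z\big)X_1(t),\qquad X_1(0)=I,$$ $$\dot X_2(t)=-i\big(-\omega_0 S_z+u_x(t)S_x+u_y(t)S_y+u_z(t)S_z\big)X_2(t),\qquad X_2(0)=I,$$ with admissible controls satisfying $u_x^2+u_y^2+u_z^2\le\gamma^2$ for all $t$. Let $X_f,\hat X_f\in SU(2)$ satisfy $\hat X_f=e^{i\varphi S_z}X_fe^{-i\varphi S_z}$ for some $\varphi\in\mathbb{R}$. Suppose an admissible control $(u_x,u_y,u_z)$ steers the system so that $X_1(t_f)=\pm X_f$ and $X_2(t_f)=\pm X_f$ (some choice of signs). Then there is an admissible control $(\hat u_x,\hat u_y,\hat u_z)$, with $\hat u_x^2+\hat u_y^2+\hat u_z^2\le\gamma^2$, that steers the system in the same time $t_f$ so that $X_1(t_f)=\pm\hat X_f$ and $X_2(t_f)=\pm\hat X_f$.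
   Context: $S_k=\frac12\sigma_k$ for $k=x,y,z$, where $\sigma_x,\sigma_y,\sigma_z$ are the Pauli matrices $\sigma_x=\begin{pmatrix}0&1\\1&0\end{pmatrix}$, $\sigma_y=\begin{pmatrix}0&-i\\i&0\end{pmatrix}$, $\sigma_z=\begin{pmatrix}1&0\\0&-1\end{pmatrix}$; $I$ is the $2\times 2$ identity. Controls are measurable real functions of time. *)

theory Defs
  imports "HOL-Analysis.Analysis"
begin

type_synonym cmat2 = "complex ^ 2 ^ 2"

definition mat2 :: "complex \<Rightarrow> complex \<Rightarrow> complex \<Rightarrow> complex \<Rightarrow> cmat2" where
  "mat2 a b c d = (\<chi> i j. if i = 1 then (if j = 1 then a else b) else (if j = 1 then c else d))"

definition cscale :: "complex \<Rightarrow> cmat2 \<Rightarrow> cmat2" where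
  "cscale c M = (\<chi> i j. c * M $ i $ j)"

definition adjoint2 :: "cmat2 \<Rightarrow> cmat2" where
  "adjoint2 M = (\<chi> i j. cnj (M $ j $ i))"

definition SU2 :: "cmat2 set" where
  "SU2 = {M. M ** adjoint2 M = mat 1 \<and> adjoint2 M ** M = mat 1 \<and> det M = 1}"

definition Sx :: cmat2 where "Sx = cscale (1/2) (mat2 0 1 1 0)"
definition Sy :: cmat2 where "Sy = cscale (1/2) (mat2 0 (-\<i>) \<i> 0)"
definition Sz :: cmat2 where "Sz = cscale (1/2) (mat2 1 0 0 (-1))"

text \<open>exp(i phi S_z), written out (S_z is diagonal).\<close>
definition expiSz :: "real \<Rightarrow> cmat2" where
  "expiSz phi = mat2 (exp (\<i> * of_real phi / 2)) 0 0 (exp (- \<i> * of_real phi / 2))"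

definition gen :: "real \<Rightarrow> real \<Rightarrow> real \<Rightarrow> real \<Rightarrow> cmat2" where
  "gen w ux uy uz = cscale (-\<i>)
     (cscale (of_real w) Sz + cscale (of_real ux) Sx + cscale (of_real uy) Sy + cscale (of_real uz) Sz)"

definition admissible :: "real \<Rightarrow> real \<Rightarrow> (real \<Rightarrow> real) \<Rightarrow> (real \<Rightarrow> real) \<Rightarrow> (real \<Rightarrow> real) \<Rightarrow> bool" where
  "admissible \<gamma> tf ux uy uz \<longleftrightarrow>
     ux \<in> borel_measurable lborel \<and> uy \<in> borel_measurable lborel \<and> uz \<in> borel_measurable lborel \<and>
     (\<forall>t\<in>{0..tf}. (ux t)\<^sup>2 + (uy t)\<^sup>2 + (uz t)\<^sup>2 \<le> \<gamma>\<^sup>2)"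

text \<open>X is a (Caratheodory) solution on [0,tf] of dX/dt = gen w (u(t)) X, X(0) = I,
  i.e. X(t) = I + integral_0^t gen(s) X(s) ds.\<close>
definition solves :: "real \<Rightarrow> (real \<Rightarrow> real) \<Rightarrow> (real \<Rightarrow> real) \<Rightarrow> (real \<Rightarrow> real) \<Rightarrow> real \<Rightarrow> (real \<Rightarrow> cmat2) \<Rightarrow> bool" where
  "solves w ux uy uz tf X \<longleftrightarrow>
     X 0 = mat 1 \<and>
     (\<forall>t\<in>{0..tf}. ((\<lambda>s. gen w (ux s) (uy s) (uz s) ** X s) has_integral (X t - mat 1)) {0..t})"

definition steers :: "real \<Rightarrow> (real \<Rightarrow> real) \<Rightarrow> (real \<Rightarrow> real) \<Rightarrow> (real \<Rightarrow> real) \<Rightarrow> real \<Rightarrow> cmat2 \<Rightarrow> bool" where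
  "steers w0 ux uy uz tf Y \<longleftrightarrow>
     (\<exists>X1 X2. solves w0 ux uy uz tf X1 \<and> solves (-w0) ux uy uz tf X2 \<and>
        (X1 tf = Y \<or> X1 tf = - Y) \<and> (X2 tf = Y \<or> X2 tf = - Y))"

end

theory Submission
  imports Defs
begin
lemma conjgen_aux:
  fixes c s :: real
  assumes ab: "a * b = 1" and aa: "a * a = of_real c + \<i> * of_real s" and bb: "b*b = of_real c - \<i> * of_real s"
  shows "mat2 a 0 0 b ** gen w ux uy uz ** mat2 b 0 0 a =
   gen w (c * ux + s * uy) (c * uy - s * ux) uz"
proof -
  have ba: "b * a = 1" using ab by (simp add: mult.commute)
  show ?thesis
  apply (simp add: vec_eq_iff matrix_matrix_mult_def mat2_def gen_def cscale_def Sx_def Sy_def Sz_def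
     forall_2 UNIV_2)
  apply (simp add: algebra_simps)
  apply (simp add: mult.assoc[symmetric] ab ba aa bb)
  apply (simp add: mult.assoc ab ba aa bb)
  apply (simp add: field_simps)
  done
qed

lemma lin: "bounded_linear (\<lambda>M::cmat2. A ** M ** B)"
proof -
  have "linear (\<lambda>M::cmat2. A ** M ** B)"
    by (rule linearI) (auto simp: vec_eq_iff matrix_matrix_mult_def sum.distrib sum_distrib_left
        sum_distrib_right algebra_simps scaleR_sum_right)
  then show ?thesis by (simp add: linear_conv_bounded_linear)
qed

lemma facts:
  "expiSz p = mat2 (exp (\<i> * of_real p / 2)) 0 0 (exp (- (\<i> * of_real p / 2)))"
  "expiSz (-p) = mat2 (exp (- (\<i> * of_real p / 2))) 0 0 (exp (\<i> * of_real p / 2))"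
  "exp (\<i> * of_real p / 2) * exp (- (\<i> * of_real p / 2)) = 1"
  "exp (\<i> * of_real p / 2) * exp (\<i> * of_real p / 2) = of_real (cos p) + \<i> * of_real (sin p)"
  "exp (- (\<i> * of_real p / 2)) * exp (- (\<i> * of_real p / 2)) = of_real (cos p) - \<i> * of_real (sin p)"
proof -
  show "expiSz p = mat2 (exp (\<i> * of_real p / 2)) 0 0 (exp (- (\<i> * of_real p / 2)))"
    by (simp add: expiSz_def)
  show "expiSz (-p) = mat2 (exp (- (\<i> * of_real p / 2))) 0 0 (exp (\<i> * of_real p / 2))"
    by (simp add: expiSz_def)
  show "exp (\<i> * of_real p / 2) * exp (- (\<i> * of_real p / 2)) = 1"
    by (simp add: exp_add[symmetric])
  have "exp (\<i> * of_real p / 2) * exp (\<i> * of_real p / 2) = exp (\<i> * of_real p)"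
    by (simp add: exp_add[symmetric])
  then show "exp (\<i> * of_real p / 2) * exp (\<i> * of_real p / 2) = of_real (cos p) + \<i> * of_real (sin p)"
    by (simp add: Euler complex_eq_iff)
  have "exp (- (\<i> * of_real p / 2)) * exp (- (\<i> * of_real p / 2)) = exp (- (\<i> * of_real p))"
    by (simp add: exp_add[symmetric])
  then show "exp (- (\<i> * of_real p / 2)) * exp (- (\<i> * of_real p / 2)) = of_real (cos p) - \<i> * of_real (sin p)"
    by (simp add: Euler complex_eq_iff)
qed

lemma conjgen: "expiSz p ** gen w ux uy uz ** expiSz (-p) =
   gen w (cos p * ux + sin p * uy) (cos p * uy - sin p * ux) uz"
  unfolding facts(2) unfolding facts(1) by (rule conjgen_aux) (use facts in auto)

lemma RR: "expiSz (-p) ** expiSz p = mat 1" "expiSz p ** expiSz (-p) = mat 1"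
  unfolding facts(2) unfolding facts(1)
  by (auto simp: vec_eq_iff matrix_matrix_mult_def mat2_def mat_def forall_2 UNIV_2 facts(3) mult.commute)

lemma solves_conj:
  assumes "solves w ux uy uz tf X"
  shows "solves w (\<lambda>s. cos p * ux s + sin p * uy s) (\<lambda>s. cos p * uy s - sin p * ux s) uz tf
           (\<lambda>t. expiSz p ** X t ** expiSz (-p))"
  unfolding solves_def
proof safe
  let ?R = "expiSz p" and ?Ri = "expiSz (-p)"
  show "?R ** X 0 ** ?Ri = mat 1" using assms RR by (simp add: solves_def)
  fix t assume t: "t \<in> {0..tf}"
  have h: "((\<lambda>s. gen w (ux s) (uy s) (uz s) ** X s) has_integral (X t - mat 1)) {0..t}"
    using assms t by (simp add: solves_def)
  have "((\<lambda>s. ?R ** (gen w (ux s) (uy s) (uz s) ** X s) ** ?Ri) has_integral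
          (?R ** (X t - mat 1) ** ?Ri)) {0..t}"
    by (rule has_integral_linear[OF h lin, unfolded o_def])
  moreover have "?R ** (X t - mat 1) ** ?Ri = ?R ** X t ** ?Ri - mat 1"
    using linear_diff[OF bounded_linear.linear[OF lin], of ?R "X t" "mat 1" ?Ri] RR by simp
  moreover have "\<And>s. ?R ** (gen w (ux s) (uy s) (uz s) ** X s) ** ?Ri =
     gen w (cos p * ux s + sin p * uy s) (cos p * uy s - sin p * ux s) (uz s) ** (?R ** X s ** ?Ri)"
  proof -
    fix s
    have "gen w (cos p * ux s + sin p * uy s) (cos p * uy s - sin p * ux s) (uz s) ** (?R ** X s ** ?Ri)
       = ?R ** gen w (ux s) (uy s) (uz s) ** (?Ri ** ?R) ** X s ** ?Ri"
      by (simp add: conjgen[symmetric] matrix_mul_assoc)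
    also have "\<dots> = ?R ** (gen w (ux s) (uy s) (uz s) ** X s) ** ?Ri"
      by (simp add: RR matrix_mul_assoc)
    finally show "?R ** (gen w (ux s) (uy s) (uz s) ** X s) ** ?Ri =
     gen w (cos p * ux s + sin p * uy s) (cos p * uy s - sin p * ux s) (uz s) ** (?R ** X s ** ?Ri)" by simp
  qed
  ultimately show "((\<lambda>s. gen w (cos p * ux s + sin p * uy s) (cos p * uy s - sin p * ux s) (uz s) **
            (?R ** X s ** ?Ri)) has_integral (?R ** X t ** ?Ri - mat 1)) {0..t}"
    by simp
qed


lemma neg_conj: "A ** (- M) ** B = - (A ** M ** B)" for A M B :: cmat2
  using linear_neg[OF bounded_linear.linear[OF lin[of A B]]] by simp

theorem proposition1:
  fixes \<omega>0 \<gamma> tf \<phi> :: real and Xf Xfh :: cmat2 and ux uy uz :: "real \<Rightarrow> real"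
  assumes "\<omega>0 > 0" and "\<gamma> > 0"
    and "Xf \<in> SU2" and "Xfh \<in> SU2"
    and "Xfh = expiSz \<phi> ** Xf ** expiSz (- \<phi>)"
    and "admissible \<gamma> tf ux uy uz"
    and "steers \<omega>0 ux uy uz tf Xf"
  shows "\<exists>vx vy vz. admissible \<gamma> tf vx vy vz \<and> steers \<omega>0 vx vy vz tf Xfh"
proof (intro exI conjI)
  let ?vx = "\<lambda>s. cos \<phi> * ux s + sin \<phi> * uy s" and ?vy = "\<lambda>s. cos \<phi> * uy s - sin \<phi> * ux s"
  have adm: "ux \<in> borel_measurable lborel" "uy \<in> borel_measurable lborel" "uz \<in> borel_measurable lborel"
    "\<forall>t\<in>{0..tf}. (ux t)\<^sup>2 + (uy t)\<^sup>2 + (uz t)\<^sup>2 \<le> \<gamma>\<^sup>2"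
    using assms(6) by (auto simp: admissible_def)
  have sq: "(?vx t)\<^sup>2 + (?vy t)\<^sup>2 = (ux t)\<^sup>2 + (uy t)\<^sup>2" for t
    using sin_cos_squared_add[of \<phi>] by algebra
  show "admissible \<gamma> tf ?vx ?vy uz"
    unfolding admissible_def using adm sq by (auto intro!: borel_measurable_add borel_measurable_diff borel_measurable_times)
  obtain X1 X2 where X: "solves \<omega>0 ux uy uz tf X1" "solves (-\<omega>0) ux uy uz tf X2"
     "X1 tf = Xf \<or> X1 tf = - Xf" "X2 tf = Xf \<or> X2 tf = - Xf"
    using assms(7) by (auto simp: steers_def)
  show "steers \<omega>0 ?vx ?vy uz tf Xfh"
    unfolding steers_def
    apply (rule exI[of _ "\<lambda>t. expiSz \<phi> ** X1 t ** expiSz (-\<phi>)"])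
    apply (rule exI[of _ "\<lambda>t. expiSz \<phi> ** X2 t ** expiSz (-\<phi>)"])
    using solves_conj[OF X(1)] solves_conj[OF X(2)] X(3,4) assms(5) by (auto simp: neg_conj)
qed

end
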